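(* Let $g>\tfrac12$, let $M_{\mathrm{I}},M_{\mathrm{II}}\in\mathbb{Z}_{\ge0}$, $M=M_{\mathrm{I}}+M_{\mathrm{II}}$, let $\mathcal{D}=((d_1,t_1),\ldots,(d_M,t_M))$ be an ordered list of pairwise distinct seed labels as described in the context, containing exactly $M_{\mathrm{I}}$ labels of Type I and $M_{\mathrm{II}}$ labels of Type II, and let $n\in\mathbb{Z}_{\ge0}$. For $N\in\{M,M+1\}$, $j=1,\ldots,N$ and $\eta>0$ define $$X^{(N)}_{(\mathrm{v},\mathrm{I}),j}(\eta)=L^{(g+j-\frac32)}_{\mathrm{v}}(-\eta),\qquad X^{(N)}_{(\mathrm{v},\mathrm{II}),j}(\eta)=(-1)^{j-1}\big(g-\tfrac12-\mathrm{v}\big)_{j-1}\,\eta^{N-j}L^{(\frac32-g-j)}_{\mathrm{v}}(\eta),$$ $$Z^{(N)}_{n,j}(\eta)=(-1)^{j-1}L^{(g+j-\frac32)}_{n+1-j}(\eta),$$ and let $\vec X^{(N)}_{(\mathrm{v},t)}$, $\vec Z^{(N)}_n$ denote the column vectors $(X^{(N)}_{(\mathrm{v},t),j})_{j=1}^N$, $(Z^{(N)}_{n,j})_{j=1}^N$. Then for $\eta>0$, $$\Xi_{\mathcal{D}}(\eta)=\eta^{-M_{\mathrm{II}}(M_{\mathrm{II}}-1)}\det\big(\vec X^{(M)}_{(d_1,t_1)}(\eta)\ \cdots\ \vec X^{(M)}_{(d_M,t_M)}(\eta)\big),$$ $$P_{\mathcal{D},n}(\eta)=\eta^{-M_{\mathrm{II}}(M_{\mathrm{II}}-1)}\det\big(\vec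 X^{(M+1)}_{(d_1,t_1)}(\eta)\ \cdots\ \vec X^{(M+1)}_{(d_M,t_M)}(\eta)\ \vec Z^{(M+1)}_n(\eta)\big).$$
   Context: $(a)_k=a(a+1)\cdots(a+k-1)$, $(a)_0=1$. For real $\alpha$ and $m\in\mathbb{Z}_{\ge0}$ the Laguerre polynomial is $L^{(\alpha)}_m(\eta)=\frac{1}{m!}\sum_{k=0}^m\frac{(-m)_k}{k!}(\alpha+k+1)_{m-k}\eta^k$, and $L^{(\alpha)}_m\equiv0$ for $m<0$. For $a\in\mathbb{R}$, $[a]'$ denotes the greatest integer strictly less than $a$. Fix $g>\frac12$. A seed label is a pair $(\mathrm{v},t)$ with $t\in\{\mathrm{I},\mathrm{II}\}$, where $\mathrm{v}\in\mathbb{Z}_{\ge0}$ if $t=\mathrm{I}$ and $\mathrm{v}\in\{0,1,\ldots,[g-\frac12]'\}$ if $t=\mathrm{II}$. Define, for $\eta>0$, $\mu_{(\mathrm{v},\mathrm{I})}(\eta)=e^{\eta}L^{(g-\frac12)}_{\mathrm{v}}(-\eta)$, $\mu_{(\mathrm{v},\mathrm{II})}(\eta)=\eta^{\frac12-g}L^{(\frac12-g)}_{\mathrm{v}}(\eta)$, and $P_n(\eta)=L^{(g-\frac12)}_n(\eta)$. The Wronskian with respect to $\eta$ is $\mathrm{W}[f_1,\ldots,f_m](\eta)=\det\big(\frac{d^{j-1}f_k}{d\eta^{j-1}}\big)_{1\le j,k\le m}$. For an ordered list $\mathcal{D}=((d_1,t_1),\ldots,(d_M,t_M))$ of seed labels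 with $M_{\mathrm{I}}$ of Type I and $M_{\mathrm{II}}$ of Type II, the denominator polynomial and the multi-indexed Laguerre polynomials are defined by $\Xi_{\mathcal{D}}(\eta)=\mathrm{W}[\mu_{(d_1,t_1)},\ldots,\mu_{(d_M,t_M)}](\eta)\,\eta^{(M_{\mathrm{I}}+g-\frac12)M_{\mathrm{II}}}e^{-M_{\mathrm{I}}\eta}$ and $P_{\mathcal{D},n}(\eta)=\mathrm{W}[\mu_{(d_1,t_1)},\ldots,\mu_{(d_M,t_M)},P_n](\eta)\,\eta^{(M_{\mathrm{I}}+g+\frac12)M_{\mathrm{II}}}e^{-M_{\mathrm{I}}\eta}$, $n\in\mathbb{Z}_{\ge0}$. *)

theory Defs
  imports "HOL-Analysis.Derivative" "Jordan_Normal_Form.Determinant"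
begin

definition laguerre :: "real \<Rightarrow> int \<Rightarrow> real \<Rightarrow> real" where
  "laguerre \<alpha> m \<eta> =
     (if m < 0 then 0 else
       (let m' = nat m in
        (1 / fact m') * (\<Sum>k\<le>m'. pochhammer (- real m') k / fact k
              * pochhammer (\<alpha> + real k + 1) (m' - k) * \<eta> ^ k)))"

definition strict_floor :: "real \<Rightarrow> int" where
  "strict_floor a = (GREATEST k::int. real_of_int k < a)"

datatype seed_type = TypeI | TypeII

type_synonym seed_label = "nat \<times> seed_type"

definition valid_label :: "real \<Rightarrow> seed_label \<Rightarrow> bool" where
  "valid_label g l = (case l of (v, TypeI) \<Rightarrow> True
                       | (v, TypeII) \<Rightarrow> int v \<le> strict_floor (g - 1/2))"

definition mu :: "real \<Rightarrow> seed_label \<Rightarrow> real \<Rightarrow> real" where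
  "mu g l \<eta> = (case l of
      (v, TypeI) \<Rightarrow> exp \<eta> * laguerre (g - 1/2) (int v) (- \<eta>)
    | (v, TypeII) \<Rightarrow> \<eta> powr (1/2 - g) * laguerre (1/2 - g) (int v) \<eta>)"

definition P :: "real \<Rightarrow> nat \<Rightarrow> real \<Rightarrow> real" where
  "P g n \<eta> = laguerre (g - 1/2) (int n) \<eta>"

definition wronskian :: "(real \<Rightarrow> real) list \<Rightarrow> real \<Rightarrow> real" where
  "wronskian fs \<eta> = Determinant.det (mat (length fs) (length fs)
       (\<lambda>(j, k). (deriv ^^ j) (fs ! k) \<eta>))"

definition M_I :: "seed_label list \<Rightarrow> nat" where
  "M_I D = length (filter (\<lambda>l. snd l = TypeI) D)"

definition M_II :: "seed_label list \<Rightarrow> nat" where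
  "M_II D = length (filter (\<lambda>l. snd l = TypeII) D)"

definition Xi :: "real \<Rightarrow> seed_label list \<Rightarrow> real \<Rightarrow> real" where
  "Xi g D \<eta> = wronskian (map (mu g) D) \<eta>
      * \<eta> powr ((real (M_I D) + g - 1/2) * real (M_II D)) * exp (- real (M_I D) * \<eta>)"

definition P_D :: "real \<Rightarrow> seed_label list \<Rightarrow> nat \<Rightarrow> real \<Rightarrow> real" where
  "P_D g D n \<eta> = wronskian (map (mu g) D @ [P g n]) \<eta>
      * \<eta> powr ((real (M_I D) + g + 1/2) * real (M_II D)) * exp (- real (M_I D) * \<eta>)"

definition X :: "real \<Rightarrow> nat \<Rightarrow> seed_label \<Rightarrow> nat \<Rightarrow> real \<Rightarrow> real" where
  "X g N l j \<eta> = (case l of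
      (v, TypeI) \<Rightarrow> laguerre (g + real j - 3/2) (int v) (- \<eta>)
    | (v, TypeII) \<Rightarrow> (-1) ^ (j - 1) * pochhammer (g - 1/2 - real v) (j - 1)
                      * \<eta> ^ (N - j) * laguerre (3/2 - g - real j) (int v) \<eta>)"

definition Z :: "real \<Rightarrow> nat \<Rightarrow> nat \<Rightarrow> real \<Rightarrow> real" where
  "Z g n j \<eta> = (-1) ^ (j - 1) * laguerre (g + real j - 3/2) (int n + 1 - int j) \<eta>"

end

theory Submission
  imports Defs "HOL-Computational_Algebra.Polynomial" "HOL-Combinatorics.Permutations"
begin


lemma det_col_scale:
  fixes A :: "nat \<Rightarrow> nat \<Rightarrow> real"
  shows "Determinant.det (mat n n (\<lambda>(i,k). c k * A i k)) = (\<Prod>k<n. c k) * Determinant.det (mat n n (\<lambda>(i,k). A i k))"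
proof -
  have "Determinant.det (mat n n (\<lambda>(i,k). c k * A i k)) =
     (\<Sum> p \<in> {p. p permutes {0 ..< n}}. signof p * (\<Prod> i = 0 ..< n. c (p i) * A i (p i)))"
    by (subst det_def'[of _ n]) (auto intro!: sum.cong prod.cong)
  also have "\<dots> = (\<Sum> p \<in> {p. p permutes {0 ..< n}}. (\<Prod>k<n. c k) * (signof p * (\<Prod> i = 0 ..< n. A i (p i))))"
  proof (rule sum.cong[OF refl])
    fix p assume "p \<in> {p. p permutes {0 ..< n}}"
    then have pp: "p permutes {0..<n}" by simp
    have "(\<Prod> i = 0 ..< n. c (p i)) = (\<Prod>k<n. c k)"
      using prod.permute[OF pp, of c, symmetric] by (simp add: comp_def lessThan_atLeast0)
    then show "signof p * (\<Prod> i = 0 ..< n. c (p i) * A i (p i)) = (\<Prod>k<n. c k) * (signof p * (\<Prod> i = 0 ..< n. A i (p i)))"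
      by (simp add: prod.distrib)
  qed
  also have "\<dots> = (\<Prod>k<n. c k) * Determinant.det (mat n n (\<lambda>(i,k). A i k))"
    by (subst det_def'[of _ n]) (auto simp: sum_distrib_left intro!: sum.cong prod.cong)
  finally show ?thesis .
qed


definition lc :: "real \<Rightarrow> nat \<Rightarrow> nat \<Rightarrow> real" where
 "lc a m k = (if k \<le> m then (-1)^k * pochhammer (a + real k + 1) (m - k) / (fact (m - k) * fact k) else 0)"

definition lp :: "real \<Rightarrow> nat \<Rightarrow> real poly" where
 "lp a m = (\<Sum>k\<le>m. monom (lc a m k) k)"

lemma coeff_lp: "coeff (lp a m) k = lc a m k"
  unfolding lp_def by (simp add: coeff_sum lc_def)

lemma poch_neg: "k \<le> m \<Longrightarrow> pochhammer (- real m) k * fact (m - k) = (-1)^k * (fact m :: real)"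
proof (induction k)
  case 0 then show ?case by simp
next
  case (Suc k)
  then have "m - k = Suc (m - Suc k)" by simp
  then have f: "(fact (m - k) :: real) = real (m - k) * fact (m - Suc k)"
    by (metis fact_Suc of_nat_Suc)
  have "pochhammer (- real m) (Suc k) * fact (m - Suc k) = pochhammer (- real m) k * (real k - real m) * fact (m - Suc k)"
    by (simp add: pochhammer_Suc)
  also have "\<dots> = - (pochhammer (- real m) k * fact (m - k))"
    using Suc.prems by (simp add: f of_nat_diff algebra_simps)
  also have "\<dots> = (-1)^Suc k * fact m" using Suc by simp
  finally show ?case .
qed

lemma laguerre_lp: "laguerre a (int m) x = poly (lp a m) x"
proof -
  have "laguerre a (int m) x = (\<Sum>k\<le>m. (1 / fact m) * (pochhammer (- real m) k / fact k
              * pochhammer (a + real k + 1) (m - k) * x ^ k))"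
    unfolding laguerre_def by (simp add: sum_distrib_left)
  also have "\<dots> = (\<Sum>k\<le>m. lc a m k * x ^ k)"
  proof (rule sum.cong[OF refl])
    fix k assume "k \<in> {..m}"
    then have km: "k \<le> m" by simp
    have p: "pochhammer (- real m) k = (-1)^k * fact m / fact (m - k)"
      using poch_neg[OF km] by (simp add: field_simps)
    show "(1 / fact m) * (pochhammer (- real m) k / fact k * pochhammer (a + real k + 1) (m - k) * x ^ k) = lc a m k * x ^ k"
      using km unfolding lc_def p by (simp add: field_simps)
  qed
  also have "\<dots> = poly (lp a m) x"
    unfolding lp_def by (simp add: poly_sum poly_monom)
  finally show ?thesis .
qed

lemma lp_deriv: "pderiv (lp a (Suc m)) = - lp (a + 1) m"
proof (rule poly_eqI)
  fix k
  show "coeff (pderiv (lp a (Suc m))) k = coeff (- lp (a + 1) m) k"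
  proof (cases "k \<le> m")
    case True
    then have e: "Suc m - Suc k = m - k" by simp
    have fs: "(fact (Suc k) :: real) = real (Suc k) * fact k" by (simp del: of_nat_Suc)
    have nz: "(fact k :: real) \<noteq> 0" "(fact (m - k) :: real) \<noteq> 0" by auto
    show ?thesis using True
      apply (simp add: coeff_pderiv coeff_lp lc_def e fs del: fact_Suc of_nat_Suc)
      apply (simp add: field_simps nz)
      done
  next
    case False then show ?thesis by (simp add: coeff_pderiv coeff_lp lc_def)
  qed
qed

lemma lp_deriv0: "pderiv (lp a 0) = 0"
  by (simp add: lp_def lc_def)

lemma aux_A: "(fd::real) \<noteq> 0 \<Longrightarrow> fk \<noteq> 0 \<Longrightarrow> D \<noteq> 0 \<Longrightarrow> K \<noteq> 0 \<Longrightarrow>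
  s*(a+k+1)*Q/(D*fd*fk) - K * (- (s*Q/(fd*(K*fk)))) = s*(Q*(a+k+1+D))/(D*fd*fk)"
  by (simp add: field_simps)

lemma lp_A: "lp a v - pderiv (lp a v) = lp (a + 1) v"
proof (rule poly_eqI)
  fix k
  show "coeff (lp a v - pderiv (lp a v)) k = coeff (lp (a + 1) v) k"
  proof (cases "k < v")
    case True
    define d where "d = v - Suc k"
    define Q where "Q = pochhammer (a + real k + 2) d"
    have vk: "v - k = Suc d" using True d_def by simp
    have vk2: "v - Suc k = d" using d_def by simp
    have fs: "(fact (Suc k) :: real) = (real k + 1) * fact k" by (simp add: algebra_simps)
    have fs2: "(fact (Suc d) :: real) = (real d + 1) * fact d" by (simp add: algebra_simps)
    have e1: "lc a v k = (-1)^k * (a + real k + 1) * Q / ((real d + 1) * fact d * fact k)"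
      unfolding lc_def Q_def using True by (simp add: vk fs2 pochhammer_rec add_ac mult.assoc)
    have e2: "lc a v (Suc k) = - ((-1)^k * Q / (fact d * ((real k + 1) * fact k)))"
      unfolding lc_def Q_def using True by (simp add: vk2 fs add_ac)
    have e3: "lc (a + 1) v k = (-1)^k * (Q * (a + real k + 2 + real d)) / ((real d + 1) * fact d * fact k)"
      unfolding lc_def Q_def using True by (simp add: vk fs2 pochhammer_Suc add_ac mult.assoc)
    have aa: "a + real k + 2 + real d = a + real k + 1 + (real d + 1)" by simp
    have "coeff (lp a v - pderiv (lp a v)) k = lc a v k - (real k + 1) * lc a v (Suc k)"
      by (simp add: coeff_pderiv coeff_lp add_ac)
    also have "\<dots> = lc (a + 1) v k"
      unfolding e1 e2 e3 by (subst aa, rule aux_A[where fd="fact d" and fk="fact k" and D="real d + 1" and K="real k + 1" and k="real k" and s="(-1)^k" and a=a and Q=Q]) auto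
    finally show ?thesis by (simp add: coeff_lp)
  next
    case False
    then show ?thesis
      by (cases "k = v") (simp_all add: coeff_pderiv coeff_lp lc_def)
  qed
qed

lemma lp_C: "smult b (lp b v) + pCons 0 (pderiv (lp b v)) = smult (real v + b) (lp (b - 1) v)"
proof (rule poly_eqI)
  fix k
  have key: "k \<le> v \<Longrightarrow> (b + real k) * pochhammer (b + real k + 1) (v - k) = (real v + b) * pochhammer (b + real k) (v - k)"
  proof -
    assume kv: "k \<le> v"
    have "(b + real k) * pochhammer (b + real k + 1) (v - k) = pochhammer (b + real k) (Suc (v - k))"
      by (simp add: pochhammer_rec)
    also have "\<dots> = pochhammer (b + real k) (v - k) * (b + real k + real (v - k))"
      by (simp add: pochhammer_Suc)
    also have "\<dots> = (real v + b) * pochhammer (b + real k) (v - k)" using kv by (simp add: of_nat_diff)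
    finally show ?thesis .
  qed
  have main: "(b + real k) * lc b v k = (real v + b) * lc (b - 1) v k"
  proof (cases "k \<le> v")
    case True
    define c where "c = (-1::real)^k / (fact (v - k) * fact k)"
    have e1: "lc b v k = c * pochhammer (b + real k + 1) (v - k)"
      unfolding lc_def c_def using True by simp
    have bb: "b - 1 + real k + 1 = b + real k" by simp
    have e2: "lc (b - 1) v k = c * pochhammer (b + real k) (v - k)"
      unfolding lc_def c_def bb using True by simp
    show ?thesis unfolding e1 e2 using arg_cong[OF key[OF True], of "(*) c"] by (simp add: algebra_simps)
  next
    case False then show ?thesis by (simp add: lc_def)
  qed
  show "coeff (smult b (lp b v) + pCons 0 (pderiv (lp b v))) k = coeff (smult (real v + b) (lp (b - 1) v)) k"
  proof (cases k)
    case 0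
    then show ?thesis using main by (simp add: coeff_lp)
  next
    case (Suc k')
    then show ?thesis using main by (simp add: coeff_pderiv coeff_lp algebra_simps del: of_nat_Suc)
  qed
qed



lemma lag_neg: "m < 0 \<Longrightarrow> laguerre a m x = 0"
  by (simp add: laguerre_def)

lemma lag_deriv: "((laguerre a m) has_real_derivative - laguerre (a + 1) (m - 1) x) (at x)"
proof (cases "m < 0")
  case True
  have "laguerre a m = (\<lambda>_. 0)" using True by (simp add: lag_neg fun_eq_iff)
  then show ?thesis using True by (simp add: lag_neg)
next
  case False
  then obtain m' where m: "m = int m'" by (metis nonneg_int_cases not_less)
  have f: "laguerre a m = (\<lambda>x. poly (lp a m') x)" by (simp add: m laguerre_lp fun_eq_iff)
  show ?thesis
  proof (cases m')
    case 0
    then show ?thesis unfolding f using poly_DERIV[of "lp a 0" x] by (simp add: lp_deriv0 m lag_neg)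
  next
    case (Suc k)
    have "m - 1 = int k" using m Suc by simp
    then show ?thesis unfolding f using poly_DERIV[of "lp a m'" x]
      by (simp add: Suc lp_deriv laguerre_lp)
  qed
qed

lemma typeI_derivs: "(deriv^^j) (mu g (v, TypeI)) = (\<lambda>\<eta>. exp \<eta> * laguerre (g - 1/2 + real j) (int v) (- \<eta>))"
proof (induction j)
  case 0 then show ?case by (simp add: mu_def fun_eq_iff)
next
  case (Suc j)
  let ?a = "g - 1/2 + real j"
  have "deriv (\<lambda>\<eta>. exp \<eta> * laguerre ?a (int v) (- \<eta>)) y = exp y * laguerre (g - 1/2 + real (Suc j)) (int v) (- y)" for y
  proof (rule DERIV_imp_deriv)
    have d: "((\<lambda>\<eta>. exp \<eta> * poly (lp ?a v) (- \<eta>)) has_real_derivative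
         exp y * poly (lp ?a v) (- y) + exp y * (poly (pderiv (lp ?a v)) (- y) * - 1)) (at y)"
      by (intro derivative_eq_intros DERIV_chain2[OF poly_DERIV] | simp)+
    have e: "exp y * poly (lp ?a v) (- y) + exp y * (poly (pderiv (lp ?a v)) (- y) * - 1)
       = exp y * poly (lp (?a + 1) v) (- y)"
      using arg_cong[OF lp_A[of ?a v], of "\<lambda>p. poly p (- y)"] by (simp add: algebra_simps)
    have a: "?a + 1 = g - 1/2 + real (Suc j)" by simp
    show "((\<lambda>\<eta>. exp \<eta> * laguerre ?a (int v) (- \<eta>)) has_real_derivative exp y * laguerre (g - 1/2 + real (Suc j)) (int v) (- y)) (at y)"
      using d unfolding e a laguerre_lp .
  qed
  then show ?case by (simp add: Suc fun_eq_iff)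
qed

lemma P_derivs: "(deriv^^j) (P g n) = (\<lambda>\<eta>. (-1)^j * laguerre (g - 1/2 + real j) (int n - int j) \<eta>)"
proof (induction j)
  case 0 then show ?case by (simp add: P_def fun_eq_iff)
next
  case (Suc j)
  have "deriv (\<lambda>\<eta>. (-1)^j * laguerre (g - 1/2 + real j) (int n - int j) \<eta>) y =
     (-1)^Suc j * laguerre (g - 1/2 + real (Suc j)) (int n - int (Suc j)) y" for y
  proof (rule DERIV_imp_deriv)
    have a: "g - 1/2 + real j + 1 = g - 1/2 + real (Suc j)" "int n - int j - 1 = int n - int (Suc j)" by simp_all
    show "((\<lambda>\<eta>. (-1)^j * laguerre (g - 1/2 + real j) (int n - int j) \<eta>) has_real_derivative
     (-1)^Suc j * laguerre (g - 1/2 + real (Suc j)) (int n - int (Suc j)) y) (at y)"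
      using DERIV_cmult[OF lag_deriv[of "g - 1/2 + real j" "int n - int j" y], of "(-1)^j"]
      unfolding a by simp
  qed
  then show ?case by (simp add: Suc fun_eq_iff)
qed

definition F2 :: "real \<Rightarrow> nat \<Rightarrow> nat \<Rightarrow> real \<Rightarrow> real" where
  "F2 g v j \<eta> = (-1)^j * pochhammer (g - 1/2 - real v) j * \<eta> powr (1/2 - g - real j) * laguerre (1/2 - g - real j) (int v) \<eta>"

lemma F2_deriv: assumes "y > 0" shows "(F2 g v j has_real_derivative F2 g v (Suc j) y) (at y)"
proof -
  let ?c = "1/2 - g - real j"
  let ?K = "(-1)^j * pochhammer (g - 1/2 - real v) j"
  have f: "F2 g v j = (\<lambda>\<eta>. ?K * (\<eta> powr ?c * poly (lp ?c v) \<eta>))"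
    by (simp add: F2_def fun_eq_iff laguerre_lp)
  have d: "((\<lambda>\<eta>. ?K * (\<eta> powr ?c * poly (lp ?c v) \<eta>)) has_real_derivative
     ?K * (?c * y powr (?c - 1) * poly (lp ?c v) y + y powr ?c * poly (pderiv (lp ?c v)) y)) (at y)"
  proof (rule DERIV_cmult)
    show "((\<lambda>\<eta>. \<eta> powr ?c * poly (lp ?c v) \<eta>) has_real_derivative
     (?c * y powr (?c - 1) * poly (lp ?c v) y + y powr ?c * poly (pderiv (lp ?c v)) y)) (at y)"
      using DERIV_mult[OF has_real_derivative_powr[OF assms] poly_DERIV, of ?c "lp ?c v"]
      by (simp add: algebra_simps)
  qed
  have yc: "y powr ?c = y * y powr (?c - 1)"
  proof -
    have e1: "1 + (?c - 1) = ?c" by linarith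
    have "y powr ?c = y powr (1 + (?c - 1))" unfolding e1 ..
    also have "\<dots> = y powr 1 * y powr (?c - 1)" by (rule powr_add)
    finally show ?thesis using assms by simp
  qed
  have e: "?c * poly (lp ?c v) y + y * poly (pderiv (lp ?c v)) y = (real v + ?c) * poly (lp (?c - 1) v) y"
    using arg_cong[OF lp_C[of ?c v], of "\<lambda>p. poly p y"] by simp
  have "?K * (?c * y powr (?c - 1) * poly (lp ?c v) y + y powr ?c * poly (pderiv (lp ?c v)) y)
      = ?K * y powr (?c - 1) * (?c * poly (lp ?c v) y + y * poly (pderiv (lp ?c v)) y)"
    unfolding yc by (simp add: algebra_simps)
  also have "\<dots> = ?K * y powr (?c - 1) * ((real v + ?c) * poly (lp (?c - 1) v) y)" by (simp only: e)
  also have "\<dots> = F2 g v (Suc j) y"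
  proof -
    have c1: "?c - 1 = 1/2 - g - real (Suc j)" by simp
    have p: "pochhammer (g - 1/2 - real v) (Suc j) = pochhammer (g - 1/2 - real v) j * (g - 1/2 - real v + real j)"
      by (simp add: pochhammer_Suc)
    show ?thesis unfolding F2_def c1 p laguerre_lp by (simp add: algebra_simps)
  qed
  finally show ?thesis using d f by simp
qed

lemma typeII_derivs: "y > 0 \<Longrightarrow> (deriv^^j) (mu g (v, TypeII)) y = F2 g v j y"
proof (induction j arbitrary: y)
  case 0 then show ?case by (simp add: mu_def F2_def)
next
  case (Suc j)
  have ev: "eventually (\<lambda>x. (deriv^^j) (mu g (v, TypeII)) x = F2 g v j x) (nhds y)"
    using eventually_nhds_in_open[of "{0<..}" y] Suc.prems
    by (auto elim!: eventually_mono intro: Suc.IH)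
  have "(deriv^^Suc j) (mu g (v, TypeII)) y = deriv (F2 g v j) y"
    by (simp add: deriv_cong_ev[OF ev refl])
  also have "\<dots> = F2 g v (Suc j) y" by (rule DERIV_imp_deriv[OF F2_deriv[OF Suc.prems]])
  finally show ?case .
qed



definition cf :: "real \<Rightarrow> nat \<Rightarrow> real \<Rightarrow> seed_label \<Rightarrow> real" where
  "cf g N \<eta> l = (case l of (v, TypeI) \<Rightarrow> exp \<eta> | (v, TypeII) \<Rightarrow> \<eta> powr (3/2 - g - real N))"

lemma entry:
  assumes "j < N" "\<eta> > 0"
  shows "(deriv^^j) (mu g l) \<eta> = cf g N \<eta> l * X g N l (Suc j) \<eta>"
proof -
  obtain v t where l: "l = (v, t)" by (cases l)
  show ?thesis
  proof (cases t)
    case TypeI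
    have a: "g + real (Suc j) - 3/2 = g - 1/2 + real j" by simp
    show ?thesis unfolding l TypeI typeI_derivs by (simp add: cf_def X_def a del: of_nat_Suc)
  next
    case TypeII
    have a: "3/2 - g - real (Suc j) = 1/2 - g - real j" by simp
    have p: "\<eta> powr (1/2 - g - real j) = \<eta> powr (3/2 - g - real N) * \<eta> ^ (N - Suc j)"
    proof -
      have "\<eta> ^ (N - Suc j) = \<eta> powr real (N - Suc j)" by (rule powr_realpow[symmetric, OF assms(2)])
      moreover have "3/2 - g - real N + real (N - Suc j) = 1/2 - g - real j"
        using assms by (simp add: of_nat_diff)
      ultimately show ?thesis
        by (metis powr_add)
    qed
    show ?thesis unfolding l TypeII typeII_derivs[OF assms(2)]
      by (simp add: cf_def X_def F2_def a p del: of_nat_Suc)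
  qed
qed

lemma prod_cf: "(\<Prod>k<length D. cf g N \<eta> (D!k)) = exp \<eta> ^ M_I D * (\<eta> powr (3/2 - g - real N)) ^ M_II D"
proof (induction D)
  case Nil then show ?case by (simp add: M_I_def M_II_def)
next
  case (Cons l D)
  obtain v t where l: "l = (v, t)" by (cases l)
  have "(\<Prod>k<length (l # D). cf g N \<eta> ((l # D)!k)) = cf g N \<eta> l * (\<Prod>k<length D. cf g N \<eta> (D!k))"
    by (simp only: length_Cons prod.lessThan_Suc_shift nth_Cons_0 nth_Cons_Suc)
  then show ?case using Cons by (cases t) (simp_all add: l cf_def M_I_def M_II_def algebra_simps)
qed

lemma len_MI_MII: "length D = M_I D + M_II D"
proof (induction D)
  case Nil then show ?case by (simp add: M_I_def M_II_def)
next
  case (Cons l D)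
  then show ?case by (cases "snd l") (simp_all add: M_I_def M_II_def)
qed

lemma fin_alg:
  assumes "\<eta> > 0" "N = MI + MII + c" "ee = real MI + g - 1/2 + real c"
  shows "exp \<eta> ^ MI * (\<eta> powr (3/2 - g - real N)) ^ MII * Dx * \<eta> powr (ee * real MII) * exp (- real MI * \<eta>)
     = \<eta> powr (- real (MII * (MII - 1))) * Dx"
proof -
  have e: "exp \<eta> ^ MI * exp (- real MI * \<eta>) = 1"
    by (simp add: exp_of_nat_mult[symmetric] exp_add[symmetric])
  have p: "(\<eta> powr (3/2 - g - real N)) ^ MII * \<eta> powr (ee * real MII)
       = \<eta> powr (- real (MII * (MII - 1)))"
  proof -
    have "(\<eta> powr (3/2 - g - real N)) ^ MII = \<eta> powr (real MII * (3/2 - g - real N))"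
      using assms by (simp add: powr_power)
    moreover have "real MII * (3/2 - g - real N) + ee * real MII = - real (MII * (MII - 1))"
      using assms(2) unfolding assms(3) by (cases MII) (simp_all add: algebra_simps)
    ultimately show ?thesis by (simp add: powr_add[symmetric])
  qed
  have "exp \<eta> ^ MI * (\<eta> powr (3/2 - g - real N)) ^ MII * Dx * \<eta> powr (ee * real MII) * exp (- real MI * \<eta>)
    = (exp \<eta> ^ MI * exp (- real MI * \<eta>)) * ((\<eta> powr (3/2 - g - real N)) ^ MII * \<eta> powr (ee * real MII)) * Dx"
    by (simp add: algebra_simps)
  then show ?thesis unfolding e p by simp
qed

theorem mainTheorem1:
  fixes g :: real and D :: "seed_label list" and n :: nat and \<eta> :: real
  assumes "g > 1/2"
    and "\<forall>l\<in>set D. valid_label g l"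
    and "distinct D"
    and "\<eta> > 0"
  shows "(Xi g D \<eta> = \<eta> powr (- real (M_II D * (M_II D - 1)))
           * Determinant.det (mat (length D) (length D)
                (\<lambda>(i, k). X g (length D) (D ! k) (i + 1) \<eta>))) \<and>
         (P_D g D n \<eta> = \<eta> powr (- real (M_II D * (M_II D - 1)))
           * Determinant.det (mat (length D + 1) (length D + 1)
                (\<lambda>(i, k). if k < length D then X g (length D + 1) (D ! k) (i + 1) \<eta>
                          else Z g n (i + 1) \<eta>)))"
proof
  let ?M = "length D"
  have W1: "wronskian (map (mu g) D) \<eta> = (\<Prod>k<?M. cf g ?M \<eta> (D!k)) *
      Determinant.det (mat ?M ?M (\<lambda>(i, k). X g ?M (D ! k) (i + 1) \<eta>))"
  proof -
    have "wronskian (map (mu g) D) \<eta> = Determinant.det (mat ?M ?M (\<lambda>(i, k). cf g ?M \<eta> (D!k) * X g ?M (D ! k) (i + 1) \<eta>))"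
      unfolding wronskian_def using assms(4) by (auto intro!: arg_cong[where f=Determinant.det] cong_mat simp: entry)
    then show ?thesis by (simp add: det_col_scale)
  qed
  show "Xi g D \<eta> = \<eta> powr (- real (M_II D * (M_II D - 1)))
           * Determinant.det (mat (length D) (length D)
                (\<lambda>(i, k). X g (length D) (D ! k) (i + 1) \<eta>))"
    unfolding Xi_def W1 prod_cf
    by (rule fin_alg[OF assms(4), of ?M "M_I D" "M_II D" 0]) (simp_all add: len_MI_MII[of D])
  let ?c = "\<lambda>k. if k < ?M then cf g (?M + 1) \<eta> (D!k) else 1"
  have W2: "wronskian (map (mu g) D @ [P g n]) \<eta> = (\<Prod>k<?M + 1. ?c k) *
      Determinant.det (mat (?M + 1) (?M + 1) (\<lambda>(i, k). if k < length D then X g (length D + 1) (D ! k) (i + 1) \<eta>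
                          else Z g n (i + 1) \<eta>))"
  proof -
    have z: "(deriv^^j) (P g n) \<eta> = Z g n (Suc j) \<eta>" for j
    proof -
      have a: "g + real (Suc j) - 3/2 = g - 1/2 + real j" "int n + 1 - int (Suc j) = int n - int j" by simp_all
      show ?thesis unfolding P_derivs Z_def a by simp
    qed
    have "wronskian (map (mu g) D @ [P g n]) \<eta> = Determinant.det (mat (?M + 1) (?M + 1) (\<lambda>(i, k). ?c k *
       (if k < length D then X g (length D + 1) (D ! k) (i + 1) \<eta> else Z g n (i + 1) \<eta>)))"
      unfolding wronskian_def using assms(4)
      by (auto intro!: arg_cong[where f=Determinant.det] cong_mat simp: entry nth_append z)
    then show ?thesis by (simp only: det_col_scale)
  qed
  have pc: "(\<Prod>k<?M + 1. ?c k) = (\<Prod>k<?M. cf g (?M + 1) \<eta> (D!k))"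
    by (simp add: prod.lessThan_Suc)
  show "P_D g D n \<eta> = \<eta> powr (- real (M_II D * (M_II D - 1)))
           * Determinant.det (mat (length D + 1) (length D + 1)
                (\<lambda>(i, k). if k < length D then X g (length D + 1) (D ! k) (i + 1) \<eta>
                          else Z g n (i + 1) \<eta>))"
    unfolding P_D_def W2 pc prod_cf
    by (rule fin_alg[OF assms(4), of "?M + 1" "M_I D" "M_II D" 1]) (simp_all add: len_MI_MII[of D])
qed


end
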